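(* Assume $h_0\neq0$, $h_1\neq0$ and $h_0x+h_1y>0$ for all $(x,y)\in D$. For each $(a,b)\in\{-,+\}^2$, the number $$t_{ab}=\begin{cases}1,&\text{if } 1\le\alpha_{ab}\ \text{or}\ 1\le2\beta_{ab}-\alpha_{ab},\\ 0,&\text{if } \beta_{ab}\le\alpha_{ab}\le0\ \text{or}\ \beta_{ab}<2\beta_{ab}-\alpha_{ab}\le0,\\ \alpha_{ab},&\text{if } 0<\alpha_{ab}<1,\\ 2\beta_{ab}-\alpha_{ab},&\text{if } 0<2\beta_{ab}-\alpha_{ab}<1\end{cases}$$ is a minimizer of $\varphi_{ab}$ on $[0,1]$. Moreover $$\min_{(x,y)\in D}\psi(x,y)=\min_{(a,b)\in\{-,+\}^2}\varphi_{ab}(t_{ab}).$$ If $(a^*,b^* )$ attains the latter minimum, then the point of $\partial D$ corresponding to parameter $t_{a^*b^*}$ on the side parametrized by $\varphi_{a^*b^*}$ is a minimizer of $\psi$ on $D$.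
   Context: Let $0<\mu_-<\mu_+$ and $0<\sigma_-<\sigma_+$ be real numbers, $D=[\mu_-,\mu_+]\times[\sigma_-,\sigma_+]$, and $h_0,h_1\in\mathbb R$. Write $\mu_M=(\mu_++\mu_-)/2$ and $\sigma_M=(\sigma_++\sigma_-)/2$. For $(x,y)\in D$ let $$\psi(x,y)=\frac{(h_0x+h_1y)^2}{2\mu_Mx+2\sigma_My-\mu_-\mu_+-\sigma_-\sigma_+}.$$ The four sides of $\partial D$ are parametrized by $t\in[0,1]$ through the following functions. For $a\in\{-,+\}$: - $\varphi_{-a}(t)=\psi(\mu_a,\ \sigma_-+t(\sigma_+-\sigma_-))$, the side $x=\mu_a$; - $\alpha_{-a}=-\frac{h_0\mu_a+h_1\sigma_-}{h_1(\sigma_+-\sigma_-)}$; - $\beta_{-a}=-\frac{\mu_a^2+\sigma_-^2}{\sigma_+^2-\sigma_-^2}$. For $b\in\{-,+\}$: - $\varphi_{+b}(t)=\psi(\mu_-+t(\mu_+-\mu_-),\ \sigma_b)$, the side $y=\sigma_b$; - $\alpha_{+b}=-\frac{h_0\mu_-+h_1\sigma_b}{h_0(\mu_+-\mu_-)}$; - $\beta_{+b}=-\frac{\mu_-^2+\sigma_b^2}{\mu_+^2-\mu_-^2}$. *)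

theory Defs
  imports Complex_Main
begin

datatype sgn = Minus | Plus

fun sel :: "sgn \<Rightarrow> real \<Rightarrow> real \<Rightarrow> real" where
  "sel Minus u v = u"
| "sel Plus u v = v"

definition psi :: "real \<Rightarrow> real \<Rightarrow> real \<Rightarrow> real \<Rightarrow> real \<Rightarrow> real \<Rightarrow> real \<Rightarrow> real \<Rightarrow> real" where
  "psi mm mp sm sp h0 h1 x y =
     (h0 * x + h1 * y)^2 /
     (2 * ((mp + mm) / 2) * x + 2 * ((sp + sm) / 2) * y - mm * mp - sm * sp)"

text \<open>Parametrization of the four sides of the boundary of D:
  side (Minus, a): x = mu_a, y = sigma_- + t (sigma_+ - sigma_-);
  side (Plus, b):  x = mu_- + t (mu_+ - mu_-), y = sigma_b.\<close>
fun side_pt :: "real \<Rightarrow> real \<Rightarrow> real \<Rightarrow> real \<Rightarrow> sgn \<Rightarrow> sgn \<Rightarrow> real \<Rightarrow> real \<times> real" where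
  "side_pt mm mp sm sp Minus a t = (sel a mm mp, sm + t * (sp - sm))"
| "side_pt mm mp sm sp Plus b t = (mm + t * (mp - mm), sel b sm sp)"

definition phi :: "real \<Rightarrow> real \<Rightarrow> real \<Rightarrow> real \<Rightarrow> real \<Rightarrow> real \<Rightarrow> sgn \<Rightarrow> sgn \<Rightarrow> real \<Rightarrow> real" where
  "phi mm mp sm sp h0 h1 i j t =
     (case side_pt mm mp sm sp i j t of (x, y) \<Rightarrow> psi mm mp sm sp h0 h1 x y)"

fun alpha :: "real \<Rightarrow> real \<Rightarrow> real \<Rightarrow> real \<Rightarrow> real \<Rightarrow> real \<Rightarrow> sgn \<Rightarrow> sgn \<Rightarrow> real" where
  "alpha mm mp sm sp h0 h1 Minus a = - (h0 * sel a mm mp + h1 * sm) / (h1 * (sp - sm))"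
| "alpha mm mp sm sp h0 h1 Plus b = - (h0 * mm + h1 * sel b sm sp) / (h0 * (mp - mm))"

fun beta :: "real \<Rightarrow> real \<Rightarrow> real \<Rightarrow> real \<Rightarrow> sgn \<Rightarrow> sgn \<Rightarrow> real" where
  "beta mm mp sm sp Minus a = - ((sel a mm mp)^2 + sm^2) / (sp^2 - sm^2)"
| "beta mm mp sm sp Plus b = - (mm^2 + (sel b sm sp)^2) / (mp^2 - mm^2)"

text \<open>The candidate minimizer t_ab, with the four cases of the paper tried in order
  (under the standing assumptions beta < 0, so the cases do not overlap).\<close>
definition tcand :: "real \<Rightarrow> real \<Rightarrow> real" where
  "tcand al be =
     (if 1 \<le> al \<or> 1 \<le> 2 * be - al then 1
      else if (be \<le> al \<and> al \<le> 0) \<or> (be < 2 * be - al \<and> 2 * be - al \<le> 0) then 0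
      else if 0 < al \<and> al < 1 then al
      else 2 * be - al)"

definition tmin :: "real \<Rightarrow> real \<Rightarrow> real \<Rightarrow> real \<Rightarrow> real \<Rightarrow> real \<Rightarrow> sgn \<Rightarrow> sgn \<Rightarrow> real" where
  "tmin mm mp sm sp h0 h1 i j =
     tcand (alpha mm mp sm sp h0 h1 i j) (beta mm mp sm sp i j)"

end

theory Submission imports Defs begin


lemma fmin:
  fixes al be t :: real
  assumes be: "be < 0" and t: "0 \<le> t" "t \<le> 1"
  shows "0 \<le> tcand al be \<and> tcand al be \<le> 1 \<and>
         (tcand al be - al)^2 / (tcand al be - be) \<le> (t - al)^2 / (t - be)"
proof -
  define u where "u = tcand al be"
  define p where "p = t - be"
  define q where "q = u - be"
  define a where "a = al - be"
  have key: "0 \<le> u \<and> u \<le> 1 \<and> 0 \<le> (p - q) * (p * q - a^2)"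
  proof (cases "1 \<le> al \<or> 1 \<le> 2 * be - al")
    case True
    then have u: "u = 1" unfolding u_def tcand_def by simp
    have "p \<le> q" using u t unfolding p_def q_def by simp
    moreover have "p * q \<le> a^2"
    proof -
      have "q \<le> \<bar>a\<bar>" using True u be unfolding q_def a_def by auto
      moreover have "0 < p" using t be p_def by simp
      ultimately have "p * q \<le> q * q" using \<open>p \<le> q\<close>
        by (smt (verit, best) mult_right_mono)
      also have "\<dots> \<le> \<bar>a\<bar> * \<bar>a\<bar>" using \<open>q \<le> \<bar>a\<bar>\<close> u be q_def
        by (intro mult_mono) auto
      finally show ?thesis by (simp add: power2_eq_square)
    qed
    ultimately show ?thesis using u by (simp add: mult_nonpos_nonpos)
  next
    case F1: False
    show ?thesis
    proof (cases "(be \<le> al \<and> al \<le> 0) \<or> (be < 2 * be - al \<and> 2 * be - al \<le> 0)")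
      case True
      then have u: "u = 0" using F1 unfolding u_def tcand_def by simp
      have "q \<le> p" using u t unfolding p_def q_def by simp
      moreover have "a^2 \<le> p * q"
      proof -
        have "\<bar>a\<bar> \<le> q" using True u be unfolding q_def a_def by auto
        have "\<bar>a\<bar> * \<bar>a\<bar> \<le> q * q" using \<open>\<bar>a\<bar> \<le> q\<close> by (intro mult_mono) auto
        also have "\<dots> \<le> p * q" using \<open>q \<le> p\<close> \<open>\<bar>a\<bar> \<le> q\<close>
          by (smt (verit, best) mult_right_mono)
        finally show ?thesis by (simp add: power2_eq_square)
      qed
      ultimately show ?thesis using u by simp
    next
      case F2: False
      have "q = \<bar>a\<bar> \<and> 0 \<le> u \<and> u \<le> 1"
      proof (cases "0 < al \<and> al < 1")
        case True
        then show ?thesis using F1 F2 be unfolding u_def q_def a_def tcand_def by auto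
      next
        case False
        then show ?thesis using F1 F2 be unfolding u_def q_def a_def tcand_def by auto
      qed
      moreover have "(p - q) * (p * q - q^2) = q * (p - q)^2" by (simp add: power2_eq_square algebra_simps)
      ultimately show ?thesis by simp
    qed
  qed
  have pp: "0 < p" using t be p_def by simp
  have qp: "0 < q" using key be q_def by simp
  have id: "(t - al)^2 * (u - be) - (u - al)^2 * (t - be) = (p - q) * (p * q - a^2)"
    unfolding p_def q_def a_def by (simp add: power2_eq_square algebra_simps)
  have "(u - al)^2 * (t - be) \<le> (t - al)^2 * (u - be)" using id key by linarith
  then have "(u - al)^2 / (u - be) \<le> (t - al)^2 / (t - be)"
    using pp qp unfolding p_def q_def by (simp add: divide_simps)
  then show ?thesis using key u_def by simp
qed



lemma sel_sq: "0 < mm \<Longrightarrow> (mp + mm) * sel a mm mp - mm * mp = (sel a mm mp)^2"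
  by (cases a) (auto simp: power2_eq_square algebra_simps)

lemma phi_rep:
  fixes mm mp sm sp h0 h1 :: real
  assumes "0 < mm" "mm < mp" "0 < sm" "sm < sp" "h0 \<noteq> 0" "h1 \<noteq> 0"
  shows "\<exists>K \<ge> 0. \<forall>t. phi mm mp sm sp h0 h1 i j t =
     K * ((t - alpha mm mp sm sp h0 h1 i j)^2 / (t - beta mm mp sm sp i j))"
proof (cases i)
  case Minus
  define mu where "mu = sel j mm mp"
  define c where "c = h1 * (sp - sm)"
  define d where "d = sp^2 - sm^2"
  have c: "c \<noteq> 0" using assms c_def by simp
  have d: "d > 0" using assms d_def by (simp add: power_strict_mono)
  have mu2: "(mp + mm) * mu - mm * mp = mu^2" unfolding mu_def using assms sel_sq by blast
  have al: "alpha mm mp sm sp h0 h1 i j = - (h0 * mu + h1 * sm) / c" using Minus mu_def c_def by simp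
  have be: "beta mm mp sm sp i j = - (mu^2 + sm^2) / d" using Minus mu_def d_def by simp
  have "\<forall>t. phi mm mp sm sp h0 h1 i j t = (c^2/d) * ((t - alpha mm mp sm sp h0 h1 i j)^2 / (t - beta mm mp sm sp i j))"
  proof
    fix t
    have N: "h0 * mu + h1 * (sm + t * (sp - sm)) = c * (t - alpha mm mp sm sp h0 h1 i j)"
      using c unfolding al c_def by (simp add: field_simps)
    have Dn: "2 * ((mp + mm) / 2) * mu + 2 * ((sp + sm) / 2) * (sm + t * (sp - sm)) - mm * mp - sm * sp
         = d * (t - beta mm mp sm sp i j)"
    proof -
      have "2 * ((mp + mm) / 2) * mu + 2 * ((sp + sm) / 2) * (sm + t * (sp - sm)) - mm * mp - sm * sp
          = ((mp + mm) * mu - mm * mp) + sm^2 + t * d" unfolding d_def by (simp add: field_simps power2_eq_square)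
      also have "\<dots> = d * (t - beta mm mp sm sp i j)" using d unfolding mu2 be by (simp add: field_simps)
      finally show ?thesis .
    qed
    have "phi mm mp sm sp h0 h1 i j t = (c * (t - alpha mm mp sm sp h0 h1 i j))^2 / (d * (t - beta mm mp sm sp i j))"
      unfolding phi_def using Minus mu_def psi_def N Dn by simp
    also have "\<dots> = (c^2/d) * ((t - alpha mm mp sm sp h0 h1 i j)^2 / (t - beta mm mp sm sp i j))"
      by (simp add: power_mult_distrib)
    finally show "phi mm mp sm sp h0 h1 i j t = (c^2/d) * ((t - alpha mm mp sm sp h0 h1 i j)^2 / (t - beta mm mp sm sp i j))" .
  qed
  moreover have "c^2/d \<ge> 0" using d by simp
  ultimately show ?thesis by blast
next
  case Plus
  define nu where "nu = sel j sm sp"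
  define c where "c = h0 * (mp - mm)"
  define d where "d = mp^2 - mm^2"
  have c: "c \<noteq> 0" using assms c_def by simp
  have d: "d > 0" using assms d_def by (simp add: power_strict_mono)
  have nu2: "(sp + sm) * nu - sm * sp = nu^2" unfolding nu_def using assms sel_sq by blast
  have al: "alpha mm mp sm sp h0 h1 i j = - (h0 * mm + h1 * nu) / c" using Plus nu_def c_def by simp
  have be: "beta mm mp sm sp i j = - (mm^2 + nu^2) / d" using Plus nu_def d_def by simp
  have "\<forall>t. phi mm mp sm sp h0 h1 i j t = (c^2/d) * ((t - alpha mm mp sm sp h0 h1 i j)^2 / (t - beta mm mp sm sp i j))"
  proof
    fix t
    have N: "h0 * (mm + t * (mp - mm)) + h1 * nu = c * (t - alpha mm mp sm sp h0 h1 i j)"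
      using c unfolding al c_def by (simp add: field_simps)
    have Dn: "2 * ((mp + mm) / 2) * (mm + t * (mp - mm)) + 2 * ((sp + sm) / 2) * nu - mm * mp - sm * sp
         = d * (t - beta mm mp sm sp i j)"
    proof -
      have "2 * ((mp + mm) / 2) * (mm + t * (mp - mm)) + 2 * ((sp + sm) / 2) * nu - mm * mp - sm * sp
          = ((sp + sm) * nu - sm * sp) + mm^2 + t * d" unfolding d_def by (simp add: field_simps power2_eq_square)
      also have "\<dots> = d * (t - beta mm mp sm sp i j)" using d unfolding nu2 be by (simp add: field_simps)
      finally show ?thesis .
    qed
    have "phi mm mp sm sp h0 h1 i j t = (c * (t - alpha mm mp sm sp h0 h1 i j))^2 / (d * (t - beta mm mp sm sp i j))"
      unfolding phi_def using Plus nu_def psi_def N Dn by simp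
    also have "\<dots> = (c^2/d) * ((t - alpha mm mp sm sp h0 h1 i j)^2 / (t - beta mm mp sm sp i j))"
      by (simp add: power_mult_distrib)
    finally show "phi mm mp sm sp h0 h1 i j t = (c^2/d) * ((t - alpha mm mp sm sp h0 h1 i j)^2 / (t - beta mm mp sm sp i j))" .
  qed
  moreover have "c^2/d \<ge> 0" using d by simp
  ultimately show ?thesis by blast
qed

lemma beta_neg:
  fixes mm mp sm sp :: real
  assumes "0 < mm" "mm < mp" "0 < sm" "sm < sp"
  shows "beta mm mp sm sp i j < 0"
proof -
  have "sm^2 < sp^2" "mm^2 < mp^2" using assms by (simp_all add: power_strict_mono)
  moreover have "0 < (sel j mm mp)^2 + sm^2" "0 < mm^2 + (sel j sm sp)^2" using assms by (simp_all add: add_nonneg_pos add_pos_nonneg)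
  ultimately show ?thesis by (cases i) (auto simp: divide_neg_pos)
qed



lemma exit1:
  fixes x e a b :: real
  assumes "a \<le> x" "x \<le> b" "e \<noteq> 0"
  obtains s where "0 \<le> s" "\<forall>r. 0 \<le> r \<and> r \<le> s \<longrightarrow> a \<le> x + r * e \<and> x + r * e \<le> b"
     "x + s * e = a \<or> x + s * e = b"
proof (cases "e > 0")
  case True
  show ?thesis
  proof (rule that[of "(b - x) / e"])
    show "0 \<le> (b - x) / e" using assms True by simp
    show "\<forall>r. 0 \<le> r \<and> r \<le> (b - x) / e \<longrightarrow> a \<le> x + r * e \<and> x + r * e \<le> b"
    proof (intro allI impI)
      fix r assume r: "0 \<le> r \<and> r \<le> (b - x) / e"
      then have "r * e \<le> b - x" using True by (simp add: pos_le_divide_eq)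
      moreover have "0 \<le> r * e" using r True by simp
      ultimately show "a \<le> x + r * e \<and> x + r * e \<le> b" using assms by simp
    qed
    show "x + (b - x) / e * e = a \<or> x + (b - x) / e * e = b" using True by simp
  qed
next
  case False
  then have e: "e < 0" using assms by simp
  show ?thesis
  proof (rule that[of "(a - x) / e"])
    show "0 \<le> (a - x) / e" using assms e by (simp add: divide_nonpos_neg)
    show "\<forall>r. 0 \<le> r \<and> r \<le> (a - x) / e \<longrightarrow> a \<le> x + r * e \<and> x + r * e \<le> b"
    proof (intro allI impI)
      fix r assume r: "0 \<le> r \<and> r \<le> (a - x) / e"
      then have "r * e \<ge> a - x" using e by (simp add: pos_le_divide_eq neg_le_divide_eq mult.commute)
      moreover have "r * e \<le> 0" using r e by (simp add: mult_nonneg_nonpos)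
      ultimately show "a \<le> x + r * e \<and> x + r * e \<le> b" using assms by simp
    qed
    show "x + (a - x) / e * e = a \<or> x + (a - x) / e * e = b" using e by simp
  qed
qed

lemma exit2:
  fixes x y e1 e2 mm mp sm sp :: real
  assumes "mm \<le> x" "x \<le> mp" "sm \<le> y" "y \<le> sp" "e1 \<noteq> 0" "e2 \<noteq> 0"
  obtains s where "0 \<le> s" "mm \<le> x + s * e1" "x + s * e1 \<le> mp" "sm \<le> y + s * e2" "y + s * e2 \<le> sp"
    "x + s * e1 = mm \<or> x + s * e1 = mp \<or> y + s * e2 = sm \<or> y + s * e2 = sp"
proof -
  obtain s1 where s1: "0 \<le> s1" "\<forall>r. 0 \<le> r \<and> r \<le> s1 \<longrightarrow> mm \<le> x + r * e1 \<and> x + r * e1 \<le> mp"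
     "x + s1 * e1 = mm \<or> x + s1 * e1 = mp" using exit1[of mm x mp e1] assms by blast
  obtain s2 where s2: "0 \<le> s2" "\<forall>r. 0 \<le> r \<and> r \<le> s2 \<longrightarrow> sm \<le> y + r * e2 \<and> y + r * e2 \<le> sp"
     "y + s2 * e2 = sm \<or> y + s2 * e2 = sp" using exit1[of sm y sp e2] assms by blast
  show ?thesis
  proof (cases "s1 \<le> s2")
    case True
    then show ?thesis using that[of s1] s1 s2 by auto
  next
    case False
    then show ?thesis using that[of s2] s1 s2 by auto
  qed
qed

lemma Q_pos:
  fixes mm mp sm sp x y :: real
  assumes "0 < mm" "mm < mp" "0 < sm" "sm < sp" "mm \<le> x" "sm \<le> y"
  shows "0 < 2 * ((mp + mm) / 2) * x + 2 * ((sp + sm) / 2) * y - mm * mp - sm * sp"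
proof -
  have "(mp + mm) * mm \<le> (mp + mm) * x" using assms by (intro mult_left_mono) auto
  moreover have "(sp + sm) * sm \<le> (sp + sm) * y" using assms by (intro mult_left_mono) auto
  moreover have "0 < mm * mm + sm * sm" using assms by (simp add: add_pos_pos)
  ultimately show ?thesis by (simp add: field_simps)
qed

lemma boundary:
  fixes mm mp sm sp h0 h1 x y :: real
  assumes pos: "0 < mm" "mm < mp" "0 < sm" "sm < sp" "h0 \<noteq> 0" "h1 \<noteq> 0"
    and xy: "mm \<le> x" "x \<le> mp" "sm \<le> y" "y \<le> sp"
  shows "\<exists>i j t. t \<in> {0..1} \<and> phi mm mp sm sp h0 h1 i j t \<le> psi mm mp sm sp h0 h1 x y"
proof -
  define c where "c = (mp + mm) * h1 - (sp + sm) * h0"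
  define sg :: real where "sg = (if c \<ge> 0 then 1 else -1)"
  have sgc: "sg * c \<ge> 0" unfolding sg_def by auto
  have sg0: "sg \<noteq> 0" unfolding sg_def by auto
  obtain s where s: "0 \<le> s" "mm \<le> x + s * (sg * h1)" "x + s * (sg * h1) \<le> mp"
    "sm \<le> y + s * (- sg * h0)" "y + s * (- sg * h0) \<le> sp"
    "x + s * (sg * h1) = mm \<or> x + s * (sg * h1) = mp \<or> y + s * (- sg * h0) = sm \<or> y + s * (- sg * h0) = sp"
    using exit2[of mm x mp sm y sp "sg * h1" "- sg * h0"] xy pos sg0 by auto
  define x' where "x' = x + s * (sg * h1)"
  define y' where "y' = y + s * (- sg * h0)"
  have L: "h0 * x' + h1 * y' = h0 * x + h1 * y" unfolding x'_def y'_def by (simp add: algebra_simps)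
  define Q where "Q = (\<lambda>x y::real. 2 * ((mp + mm) / 2) * x + 2 * ((sp + sm) / 2) * y - mm * mp - sm * sp)"
  have Qe: "Q x' y' = Q x y + s * (sg * c)" unfolding Q_def x'_def y'_def c_def by (simp add: field_simps)
  have Qp: "0 < Q x y" unfolding Q_def using Q_pos pos xy by blast
  have "Q x y \<le> Q x' y'" using Qe sgc s(1) by simp
  then have le: "psi mm mp sm sp h0 h1 x' y' \<le> psi mm mp sm sp h0 h1 x y"
    unfolding psi_def L using Qp unfolding Q_def by (intro divide_left_mono) auto
  have x'r: "mm \<le> x'" "x' \<le> mp" and y'r: "sm \<le> y'" "y' \<le> sp" using s unfolding x'_def y'_def by auto
  have bd: "x' = mm \<or> x' = mp \<or> y' = sm \<or> y' = sp" using s(6) unfolding x'_def y'_def .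
  have "\<exists>i j t. t \<in> {0..1} \<and> side_pt mm mp sm sp i j t = (x', y')"
  proof -
    define ty where "ty = (y' - sm) / (sp - sm)"
    define tx where "tx = (x' - mm) / (mp - mm)"
    have ty: "ty \<in> {0..1}" "sm + ty * (sp - sm) = y'" unfolding ty_def using y'r pos by (auto simp: field_simps)
    have tx: "tx \<in> {0..1}" "mm + tx * (mp - mm) = x'" unfolding tx_def using x'r pos by (auto simp: field_simps)
    show ?thesis
    proof (cases "x' = mm")
      case True then show ?thesis using ty by (intro exI[of _ Minus] exI[of _ Minus] exI[of _ ty]) auto
    next
      case F1: False
      show ?thesis
      proof (cases "x' = mp")
        case True then show ?thesis using ty by (intro exI[of _ Minus] exI[of _ Plus] exI[of _ ty]) auto
      next
        case F2: False
        show ?thesis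
        proof (cases "y' = sm")
          case True then show ?thesis using tx by (intro exI[of _ Plus] exI[of _ Minus] exI[of _ tx]) auto
        next
          case False
          then have "y' = sp" using bd F1 F2 by auto
          then show ?thesis using tx by (intro exI[of _ Plus] exI[of _ Plus] exI[of _ tx]) auto
        qed
      qed
    qed
  qed
  then obtain i j t where it: "t \<in> {0..1}" "side_pt mm mp sm sp i j t = (x', y')" by blast
  then have "phi mm mp sm sp h0 h1 i j t = psi mm mp sm sp h0 h1 x' y'" unfolding phi_def by simp
  then show ?thesis using le it by metis
qed

lemma side_in:
  fixes mm mp sm sp t :: real
  assumes "mm < mp" "sm < sp" "0 \<le> t" "t \<le> 1"
  shows "side_pt mm mp sm sp i j t \<in> {mm..mp} \<times> {sm..sp}"
proof -
  have "0 \<le> t * (sp - sm)" "t * (sp - sm) \<le> sp - sm" using assms by (auto simp: mult_left_le_one_le)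
  moreover have "0 \<le> t * (mp - mm)" "t * (mp - mm) \<le> mp - mm" using assms by (auto simp: mult_left_le_one_le)
  ultimately show ?thesis using assms by (cases i; cases j) (auto simp del: mult_le_cancel_right1 simp: algebra_simps)
qed

lemma set4: "{f i j | i j. True} = {f Minus Minus, f Minus Plus, f Plus Minus, f Plus Plus}"
proof -
  have "\<And>i j. f i j \<in> {f Minus Minus, f Minus Plus, f Plus Minus, f Plus Plus}"
    by (case_tac i; case_tac j) auto
  then show ?thesis by blast
qed

theorem mainTheorem6:
  fixes mm mp sm sp h0 h1 :: real
  defines "D \<equiv> {mm..mp} \<times> {sm..sp}"
  defines "m \<equiv> Min {phi mm mp sm sp h0 h1 i j (tmin mm mp sm sp h0 h1 i j) | i j. True}"
  assumes "0 < mm" "mm < mp" "0 < sm" "sm < sp"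
    and "h0 \<noteq> 0" "h1 \<noteq> 0"
    and "\<forall>(x, y) \<in> D. h0 * x + h1 * y > 0"
  shows "(\<forall>i j. tmin mm mp sm sp h0 h1 i j \<in> {0..1} \<and>
            (\<forall>t \<in> {0..1}. phi mm mp sm sp h0 h1 i j (tmin mm mp sm sp h0 h1 i j)
                            \<le> phi mm mp sm sp h0 h1 i j t))
    \<and> (\<exists>(x, y) \<in> D. psi mm mp sm sp h0 h1 x y = m)
    \<and> (\<forall>(x, y) \<in> D. m \<le> psi mm mp sm sp h0 h1 x y)
    \<and> (\<forall>i j. phi mm mp sm sp h0 h1 i j (tmin mm mp sm sp h0 h1 i j) = m \<longrightarrow>
            (let p = side_pt mm mp sm sp i j (tmin mm mp sm sp h0 h1 i j) in
               p \<in> D \<and> (\<forall>(x, y) \<in> D. psi mm mp sm sp h0 h1 (fst p) (snd p) \<le> psi mm mp sm sp h0 h1 x y)))"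
proof -
  note pos = assms(3-8)
  define f where "f = (\<lambda>i j. phi mm mp sm sp h0 h1 i j (tmin mm mp sm sp h0 h1 i j))"
  have P1: "\<And>i j. tmin mm mp sm sp h0 h1 i j \<in> {0..1} \<and>
            (\<forall>t \<in> {0..1}. phi mm mp sm sp h0 h1 i j (tmin mm mp sm sp h0 h1 i j)
                            \<le> phi mm mp sm sp h0 h1 i j t)"
  proof -
    fix i j
    obtain K where K: "K \<ge> 0" "\<forall>t. phi mm mp sm sp h0 h1 i j t =
     K * ((t - alpha mm mp sm sp h0 h1 i j)^2 / (t - beta mm mp sm sp i j))"
      using phi_rep[OF pos] by blast
    have be: "beta mm mp sm sp i j < 0" using beta_neg pos by blast
    have "tmin mm mp sm sp h0 h1 i j \<in> {0..1}" using fmin[OF be, of 0] unfolding tmin_def by simp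
    moreover have "\<forall>t \<in> {0..1}. phi mm mp sm sp h0 h1 i j (tmin mm mp sm sp h0 h1 i j)
                            \<le> phi mm mp sm sp h0 h1 i j t"
    proof
      fix t :: real assume "t \<in> {0..1}"
      then have "(tmin mm mp sm sp h0 h1 i j - alpha mm mp sm sp h0 h1 i j)^2 / (tmin mm mp sm sp h0 h1 i j - beta mm mp sm sp i j)
         \<le> (t - alpha mm mp sm sp h0 h1 i j)^2 / (t - beta mm mp sm sp i j)"
        using fmin[OF be, of t] unfolding tmin_def by simp
      then show "phi mm mp sm sp h0 h1 i j (tmin mm mp sm sp h0 h1 i j) \<le> phi mm mp sm sp h0 h1 i j t"
        using K(2) mult_left_mono[OF _ K(1)] by (metis times_divide_eq_right)
    qed
    ultimately show "?thesis i j" by blast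
  qed
  have S: "{phi mm mp sm sp h0 h1 i j (tmin mm mp sm sp h0 h1 i j) | i j. True} = {f i j | i j. True}"
    unfolding f_def by simp
  have fin: "finite {f i j | i j. True}" unfolding set4 by simp
  have mle: "\<And>i j. m \<le> f i j" unfolding m_def S using fin by (intro Min_le) auto
  have "m \<in> {f i j | i j. True}" unfolding m_def S using fin by (intro Min_in) auto
  then obtain i0 j0 where ij0: "m = f i0 j0" by blast
  have inD: "\<And>i j. side_pt mm mp sm sp i j (tmin mm mp sm sp h0 h1 i j) \<in> D"
    unfolding D_def using side_in P1 pos by auto
  have psif: "\<And>i j. psi mm mp sm sp h0 h1 (fst (side_pt mm mp sm sp i j (tmin mm mp sm sp h0 h1 i j)))
      (snd (side_pt mm mp sm sp i j (tmin mm mp sm sp h0 h1 i j))) = f i j"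
    unfolding f_def phi_def by (simp add: case_prod_beta)
  have P3: "\<forall>(x, y) \<in> D. m \<le> psi mm mp sm sp h0 h1 x y"
  proof (clarify)
    fix x y assume "(x, y) \<in> D"
    then have xy: "mm \<le> x" "x \<le> mp" "sm \<le> y" "y \<le> sp" unfolding D_def by auto
    obtain i j t where t: "t \<in> {0..1}" "phi mm mp sm sp h0 h1 i j t \<le> psi mm mp sm sp h0 h1 x y"
      using boundary[OF pos xy] by blast
    have "m \<le> f i j" by (rule mle)
    also have "\<dots> \<le> phi mm mp sm sp h0 h1 i j t" using P1 t unfolding f_def by blast
    also have "\<dots> \<le> psi mm mp sm sp h0 h1 x y" by (rule t(2))
    finally show "m \<le> psi mm mp sm sp h0 h1 x y" .
  qed
  have P2: "\<exists>(x, y) \<in> D. psi mm mp sm sp h0 h1 x y = m"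
    using inD[of i0 j0] psif[of i0 j0] ij0
    by (intro bexI[of _ "side_pt mm mp sm sp i0 j0 (tmin mm mp sm sp h0 h1 i0 j0)"]) (auto simp: case_prod_beta)
  have P4: "\<forall>i j. phi mm mp sm sp h0 h1 i j (tmin mm mp sm sp h0 h1 i j) = m \<longrightarrow>
            (let p = side_pt mm mp sm sp i j (tmin mm mp sm sp h0 h1 i j) in
               p \<in> D \<and> (\<forall>(x, y) \<in> D. psi mm mp sm sp h0 h1 (fst p) (snd p) \<le> psi mm mp sm sp h0 h1 x y))"
  proof (intro allI impI)
    fix i j assume h: "phi mm mp sm sp h0 h1 i j (tmin mm mp sm sp h0 h1 i j) = m"
    then have "psi mm mp sm sp h0 h1 (fst (side_pt mm mp sm sp i j (tmin mm mp sm sp h0 h1 i j)))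
      (snd (side_pt mm mp sm sp i j (tmin mm mp sm sp h0 h1 i j))) = m" using psif unfolding f_def by simp
    then show "let p = side_pt mm mp sm sp i j (tmin mm mp sm sp h0 h1 i j) in
               p \<in> D \<and> (\<forall>(x, y) \<in> D. psi mm mp sm sp h0 h1 (fst p) (snd p) \<le> psi mm mp sm sp h0 h1 x y)"
      using inD P3 by (auto simp: Let_def)
  qed
  show ?thesis using P1 P2 P3 P4 by blast
qed

end
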